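(* Let $c\ge1$ be an integer and $\lambda,\mu,\alpha>0$ with $\lambda<c\mu$. Consider the $(c+1)\times(c+1)$ matrices (rows and columns indexed $0,\dots,c$) $Q_1=\lambda I$, $Q_{-1}=\mathrm{diag}(0,\mu,2\mu,\dots,c\mu)$, and $Q_0$ upper bidiagonal with diagonal entries $(Q_0)_{j,j}=-q_j$, $q_j=\lambda+(c-j)\alpha+j\mu$, superdiagonal entries $(Q_0)_{j,j+1}=(c-j)\alpha$ ($j=0,\dots,c-1$), and all other entries $0$. Let $R=(r_{i,j})$ be the minimal nonnegative solution of $Q_1+RQ_0+R^2Q_{-1}=O$. Then $R$ is upper triangular, its diagonal entries are $$r_{0,0}=\frac{\lambda}{\lambda+c\alpha},\quad r_{c,c}=\frac{\lambda}{c\mu},\quad r_{i,i}=\frac{\lambda+i\mu+(c-i)\alpha-\sqrt{(\lambda+i\mu+(c-i)\alpha)^2-4i\lambda\mu}}{2i\mu}\ (1\le i\le c-1),$$ and for $0\le i<j\le c$, $$r_{i,j}=\frac{(c-j+1)\alpha\, r_{i,j-1}+j\mu\sum_{k=i+1}^{j-1}r_{i,k}r_{k,j}}{\lambda+(c-j)\alpha+j\mu-j\mu(r_{i,i}+r_{j,j})}.$$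
   Context: $Q_{1},Q_0,Q_{-1}$ are the level-up, local and level-down blocks of the homogeneous part (levels $\ge c$, level = number of jobs, phase = number of busy servers) of the QBD generator of the M/M/$c$ queue with exponential setup times under the ON-OFF policy; $R$ is the rate matrix of that homogeneous part. *)

theory Defs
  imports Complex_Main
begin

text \<open>Matrices of size (c+1) x (c+1), rows and columns indexed 0..c, represented as
  functions nat => nat => real; only entries with indices in {0..c} are meaningful.\<close>

definition mmul :: "nat \<Rightarrow> (nat \<Rightarrow> nat \<Rightarrow> real) \<Rightarrow> (nat \<Rightarrow> nat \<Rightarrow> real) \<Rightarrow> (nat \<Rightarrow> nat \<Rightarrow> real)" where
  "mmul c A B = (\<lambda>i j. \<Sum>k=0..c. A i k * B k j)"

definition Qup :: "real \<Rightarrow> nat \<Rightarrow> nat \<Rightarrow> real" where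
  "Qup lam = (\<lambda>i j. if i = j then lam else 0)"

definition Qdown :: "real \<Rightarrow> nat \<Rightarrow> nat \<Rightarrow> real" where
  "Qdown mu = (\<lambda>i j. if i = j then real j * mu else 0)"

definition Qloc :: "nat \<Rightarrow> real \<Rightarrow> real \<Rightarrow> real \<Rightarrow> nat \<Rightarrow> nat \<Rightarrow> real" where
  "Qloc c lam mu al = (\<lambda>i j.
     if i = j then - (lam + real (c - j) * al + real j * mu)
     else if j = i + 1 then real (c - i) * al else 0)"

definition nonneg_mat :: "nat \<Rightarrow> (nat \<Rightarrow> nat \<Rightarrow> real) \<Rightarrow> bool" where
  "nonneg_mat c R \<longleftrightarrow> (\<forall>i\<le>c. \<forall>j\<le>c. 0 \<le> R i j)"

definition solves_R_eq :: "nat \<Rightarrow> real \<Rightarrow> real \<Rightarrow> real \<Rightarrow> (nat \<Rightarrow> nat \<Rightarrow> real) \<Rightarrow> bool" where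
  "solves_R_eq c lam mu al R \<longleftrightarrow>
     (\<forall>i\<le>c. \<forall>j\<le>c. Qup lam i j + mmul c R (Qloc c lam mu al) i j
                      + mmul c (mmul c R R) (Qdown mu) i j = 0)"

definition minimal_nonneg_solution :: "nat \<Rightarrow> real \<Rightarrow> real \<Rightarrow> real \<Rightarrow> (nat \<Rightarrow> nat \<Rightarrow> real) \<Rightarrow> bool" where
  "minimal_nonneg_solution c lam mu al R \<longleftrightarrow>
     nonneg_mat c R \<and> solves_R_eq c lam mu al R \<and>
     (\<forall>S. nonneg_mat c S \<and> solves_R_eq c lam mu al S \<longrightarrow> (\<forall>i\<le>c. \<forall>j\<le>c. R i j \<le> S i j))"

end

theory Submission imports Defs begin

definition xd :: "nat \<Rightarrow> real \<Rightarrow> real \<Rightarrow> real \<Rightarrow> nat \<Rightarrow> real" where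
  "xd c lam mu al i = (if i = 0 then lam / (lam + real c * al) else
     (lam + real i * mu + real (c - i) * al
                  - sqrt ((lam + real i * mu + real (c - i) * al)\<^sup>2 - 4 * real i * lam * mu))
                 / (2 * real i * mu))"

lemma xd_props:
  assumes "lam > 0" "mu > 0" "al > 0" "1 \<le> i" "i \<le> c"
  defines "q \<equiv> lam + real i * mu + real (c - i) * al"
  defines "x \<equiv> xd c lam mu al i"
  shows "real i * mu * x\<^sup>2 - q * x + lam = 0" "2 * real i * mu * x \<le> q" "0 < x"
    "real i * mu * x \<le> lam" "i < c \<Longrightarrow> x < 1"
proof -
  define D where "D = q\<^sup>2 - 4 * real i * lam * mu"
  have ip: "real i \<ge> 1" using assms by simp
  have qge: "q \<ge> lam + real i * mu" unfolding q_def using assms by simp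
  have D0: "D \<ge> 0" unfolding D_def
  proof -
    have "(lam - real i * mu)\<^sup>2 \<ge> 0" by simp
    moreover have "q\<^sup>2 \<ge> (lam + real i * mu)\<^sup>2" using qge assms ip
      by (intro power_mono) auto
    ultimately show "q\<^sup>2 - 4 * real i * lam * mu \<ge> 0" by (simp add: power2_eq_square algebra_simps)
  qed
  define s where "s = sqrt D"
  have s0: "s \<ge> 0" and s2: "s\<^sup>2 = D" using D0 by (auto simp: s_def)
  have imp: "real i * mu > 0" using assms ip by simp
  have qp: "q > 0" using qge assms(1) imp by linarith
  have Dlt: "D < q\<^sup>2" unfolding D_def using assms ip by (simp add: mult_pos_pos)
  have slt: "s < q"
  proof (rule ccontr)
    assume "\<not> s < q" hence "q \<le> s" by simp
    hence "q\<^sup>2 \<le> s\<^sup>2" using qp by (intro power_mono) auto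
    thus False using s2 Dlt by simp
  qed
  have xe: "x = (q - s) / (2 * real i * mu)" unfolding x_def xd_def s_def D_def q_def using assms by simp
  have xe2: "2 * real i * mu * x = q - s" proof - have "2 * real i * mu \<noteq> 0" using imp by (simp only: mult.assoc) thus ?thesis using xe by simp qed
  show r: "real i * mu * x\<^sup>2 - q * x + lam = 0"
  proof -
    define a where "a = real i * mu"
    have xe3: "2 * a * x = q - s" using xe2 unfolding a_def by (simp add: mult.assoc)
    have "4 * a * (a * x\<^sup>2 - q * x + lam) = (2 * a * x)\<^sup>2 - 2 * q * (2 * a * x) + 4 * a * lam"
      by (simp add: power2_eq_square algebra_simps)
    hence "4 * (real i * mu) * (real i * mu * x\<^sup>2 - q * x + lam) = (q - s)\<^sup>2 - 2 * q * (q - s) + 4 * real i * mu * lam"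
      unfolding xe3 unfolding a_def by (simp add: mult.assoc)
    also have "\<dots> = 0" using s2 unfolding D_def by (simp add: power2_eq_square algebra_simps)
    finally show ?thesis using imp assms(2,4) by simp
  qed
  show v: "2 * real i * mu * x \<le> q" using xe2 s0 by simp
  show xp: "0 < x" using xe imp slt by (simp add: mult.assoc)
  show "real i * mu * x \<le> lam"
  proof (rule ccontr)
    assume a: "\<not> ?thesis"
    define y where "y = lam / (real i * mu)"
    have yy: "real i * mu * y = lam" using imp assms(2,4) by (simp add: y_def)
    have "real i * mu * y\<^sup>2 - q * y + lam = y * (lam - q + real i * mu)"
      using yy by (simp add: power2_eq_square algebra_simps)
    also have "\<dots> \<le> 0" using assms imp unfolding q_def y_def
      by (intro mult_nonneg_nonpos) auto
    finally have fy: "real i * mu * y\<^sup>2 - q * y + lam \<le> 0" .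
    have yx: "y < x" proof -
      have "real i * mu * y < real i * mu * x" using a yy by simp
      thus ?thesis using imp mult_less_cancel_left_pos by blast
    qed
    have "(real i * mu * y\<^sup>2 - q * y + lam) - (real i * mu * x\<^sup>2 - q * x + lam) = (y - x) * (real i * mu * (y + x) - q)"
      by (simp add: power2_eq_square algebra_simps)
    moreover have "(y - x) * (real i * mu * (y + x) - q) > 0"
    proof (rule mult_neg_neg)
      show "y - x < 0" using yx by simp
      have "real i * mu * (y + x) < real i * mu * (2 * x)" using imp yx by (intro mult_strict_left_mono) auto
      thus "real i * mu * (y + x) - q < 0" using v by simp
    qed
    ultimately show False using fy r by simp
  qed
  show "x < 1" if ic: "i < c"
  proof (rule ccontr)
    assume "\<not> x < 1" hence x1: "x \<ge> 1" by simp
    have "(real i * mu * 1\<^sup>2 - q * 1 + lam) - (real i * mu * x\<^sup>2 - q * x + lam) = (1 - x) * (real i * mu * (1 + x) - q)"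
      by (simp add: power2_eq_square algebra_simps)
    moreover have "(1 - x) * (real i * mu * (1 + x) - q) \<ge> 0"
    proof (rule mult_nonpos_nonpos)
      show "1 - x \<le> 0" using x1 by simp
      have "real i * mu * (1 + x) \<le> real i * mu * (2 * x)" using imp x1 by (intro mult_left_mono) auto
      thus "real i * mu * (1 + x) - q \<le> 0" using v by simp
    qed
    moreover have "real i * mu * 1\<^sup>2 - q * 1 + lam < 0" using ic assms unfolding q_def by simp
    ultimately show False using r by simp
  qed
qed

lemma xd0:
  assumes "lam > 0" "al > 0" "c \<ge> 1"
  shows "(lam + real c * al) * xd c lam mu al 0 = lam" "0 < xd c lam mu al 0" "xd c lam mu al 0 < 1"
proof -
  have p: "lam + real c * al > 0" using assms by (simp add: add_pos_nonneg)
  show "(lam + real c * al) * xd c lam mu al 0 = lam" using p by (simp add: xd_def)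
  show "0 < xd c lam mu al 0" using p assms by (simp add: xd_def)
  have "real c * al > 0" using assms by simp
  thus "xd c lam mu al 0 < 1" using p assms by (simp add: xd_def)
qed

lemma xd_lt1:
  assumes "lam > 0" "mu > 0" "al > 0" "c \<ge> 1" "i < c"
  shows "xd c lam mu al i < 1" "0 < xd c lam mu al i"
  using xd0[OF assms(1,3,4)] xd_props(3,5)[OF assms(1,2,3), of i c] assms
  by (cases "i = 0"; auto)+

lemma den_pos:
  assumes "lam > 0" "mu > 0" "al > 0" "c \<ge> 1" "i < j" "j \<le> c"
  shows "lam + real (c - j) * al + real j * mu - real j * mu * (xd c lam mu al i + xd c lam mu al j) > 0"
proof -
  define x where "x = xd c lam mu al j"
  define q where "q = lam + real j * mu + real (c - j) * al"
  have j1: "1 \<le> j" using assms by simp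
  note P = xd_props[OF assms(1,2,3) j1 assms(6), folded x_def q_def]
  have a: "real j * mu > 0" using j1 assms by simp
  have "x * (q - real j * mu * x) = lam" using P(1) by (simp add: power2_eq_square algebra_simps)
  hence "x * (q - real j * mu * x) \<ge> x * (real j * mu)" using P(4) by (simp add: mult.commute)
  hence h1: "q - real j * mu * x \<ge> real j * mu" using P(3) by simp
  have "xd c lam mu al i < 1" using xd_lt1[OF assms(1-4)] assms by simp
  hence "real j * mu * xd c lam mu al i < real j * mu" using a by (metis mult.right_neutral mult_strict_left_mono)
  thus ?thesis using h1 unfolding q_def x_def by (simp add: algebra_simps)
qed

function Sm :: "nat \<Rightarrow> real \<Rightarrow> real \<Rightarrow> real \<Rightarrow> nat \<Rightarrow> nat \<Rightarrow> real" where
 "Sm c lam mu al i j = (if j < i then 0 else if i = j then xd c lam mu al i else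
    (real (c - j + 1) * al * Sm c lam mu al i (j - 1)
       + real j * mu * (\<Sum>k=i+1..j-1. Sm c lam mu al i k * Sm c lam mu al k j))
    / (lam + real (c - j) * al + real j * mu - real j * mu * (xd c lam mu al i + xd c lam mu al j)))"
  by pat_completeness auto
termination by (relation "measure (\<lambda>(c,lam,mu,al,i,j). j - i)") auto

declare Sm.simps[simp del]

lemma Sm_nonneg:
  assumes "lam > 0" "mu > 0" "al > 0" "c \<ge> 1"
  shows "j \<le> c \<Longrightarrow> 0 \<le> Sm c lam mu al i j"
proof (induction "j - i" arbitrary: i j rule: less_induct)
  case less
  have IH: "\<And>i' j'. j' - i' < j - i \<Longrightarrow> j' \<le> c \<Longrightarrow> 0 \<le> Sm c lam mu al i' j'" using less.hyps by blast
  show ?case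
  proof (cases "j < i")
    case True thus ?thesis by (subst Sm.simps) simp
  next
    case f1: False
    show ?thesis
    proof (cases "i = j")
      case True
      have "0 < xd c lam mu al i"
      proof (cases "i = 0")
        case True thus ?thesis using xd0[OF assms(1,3,4)] by simp
      next
        case False thus ?thesis using xd_props(3)[OF assms(1,2,3), of i c] \<open>i = j\<close> less.prems by simp
      qed
      thus ?thesis using True by (subst Sm.simps) simp
    next
      case False
      hence ij: "i < j" using f1 by simp
      have d: "lam + real (c - j) * al + real j * mu - real j * mu * (xd c lam mu al i + xd c lam mu al j) > 0"
        using den_pos[OF assms ij less.prems] .
      have n1: "0 \<le> Sm c lam mu al i (j - 1)" using IH[of "j - 1" i] ij less.prems by simp
      have n2: "0 \<le> (\<Sum>k=i+1..j-1. Sm c lam mu al i k * Sm c lam mu al k j)"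
      proof (rule sum_nonneg)
        fix k assume k: "k \<in> {i+1..j-1}"
        have "0 \<le> Sm c lam mu al i k" using IH[of k i] k less.prems by auto
        moreover have "0 \<le> Sm c lam mu al k j" using IH[of j k] k less.prems by auto
        ultimately show "0 \<le> Sm c lam mu al i k * Sm c lam mu al k j" by simp
      qed
      have "0 \<le> real (c - j + 1) * al * Sm c lam mu al i (j - 1)
       + real j * mu * (\<Sum>k=i+1..j-1. Sm c lam mu al i k * Sm c lam mu al k j)"
        using n1 n2 assms by simp
      thus ?thesis using d ij by (subst Sm.simps) simp
    qed
  qed
qed

lemma eq_entry:
  assumes "i \<le> c" "j \<le> c"
  shows "Qup lam i j + mmul c M (Qloc c lam mu al) i j + mmul c (mmul c M M) (Qdown mu) i j
    = (if i = j then lam else 0) - (lam + real (c - j) * al + real j * mu) * M i j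
      + (if 1 \<le> j then real (c - j + 1) * al * M i (j - 1) else 0)
      + real j * mu * (\<Sum>l=0..c. M i l * M l j)"
proof -
  have e1: "mmul c M (Qloc c lam mu al) i j = (\<Sum>k=0..c. (if k = j then - (lam + real (c - j) * al + real j * mu) * M i j else 0)
        + (if k = j - 1 \<and> 1 \<le> j then real (c - j + 1) * al * M i (j - 1) else 0))"
    unfolding mmul_def
  proof (intro sum.cong refl)
    fix k assume k: "k \<in> {0..c}"
    show "M i k * Qloc c lam mu al k j = (if k = j then - (lam + real (c - j) * al + real j * mu) * M i j else 0)
        + (if k = j - 1 \<and> 1 \<le> j then real (c - j + 1) * al * M i (j - 1) else 0)"
    proof (cases "k = j")
      case True
      moreover have "\<not> (k = j - 1 \<and> 1 \<le> j)" using True by auto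
      ultimately show ?thesis by (simp add: Qloc_def, blast)
    next
      case False
      show ?thesis
      proof (cases "j = k + 1")
        case True
        hence "c - k = c - j + 1" using assms by simp
        thus ?thesis using True False by (simp add: Qloc_def)
      next
        case F2: False
        hence "\<not> (k = j - 1 \<and> 1 \<le> j)" by auto
        thus ?thesis using F2 False by (simp add: Qloc_def, blast)
      qed
    qed
  qed
  have e1': "mmul c M (Qloc c lam mu al) i j = - (lam + real (c - j) * al + real j * mu) * M i j
      + (if 1 \<le> j then real (c - j + 1) * al * M i (j - 1) else 0)"
  proof -
    have a1: "(\<Sum>k=0..c. (if k = j then - (lam + real (c - j) * al + real j * mu) * M i j else 0))
       = - (lam + real (c - j) * al + real j * mu) * M i j" using assms by (simp add: sum.delta)
    have a2: "(\<Sum>k=0..c. (if k = j - 1 \<and> 1 \<le> j then real (c - j + 1) * al * M i (j - 1) else 0))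
       = (if 1 \<le> j then real (c - j + 1) * al * M i (j - 1) else 0)"
    proof (cases "1 \<le> j")
      case True
      hence "(\<Sum>k=0..c. (if k = j - 1 \<and> 1 \<le> j then real (c - j + 1) * al * M i (j - 1) else 0))
        = (\<Sum>k=0..c. (if k = j - 1 then real (c - j + 1) * al * M i (j - 1) else 0))" by simp
      also have "\<dots> = real (c - j + 1) * al * M i (j - 1)" using assms True by (subst sum.delta) auto
      finally show ?thesis using True by simp
    qed simp
    show ?thesis unfolding e1 sum.distrib a1 a2 ..
  qed
  have e2: "mmul c (mmul c M M) (Qdown mu) i j = (\<Sum>l=0..c. M i l * M l j) * (real j * mu)"
  proof -
    have "mmul c (mmul c M M) (Qdown mu) i j = (\<Sum>k=0..c. if k = j then mmul c M M i j * (real j * mu) else 0)"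
      unfolding mmul_def[of c "mmul c M M"] Qdown_def by (intro sum.cong refl) auto
    also have "\<dots> = mmul c M M i j * (real j * mu)" using assms by (simp add: sum.delta)
    finally show ?thesis by (simp add: mmul_def)
  qed
  show ?thesis unfolding e1' e2 Qup_def by (simp add: algebra_simps)
qed

definition upper :: "nat \<Rightarrow> (nat \<Rightarrow> nat \<Rightarrow> real) \<Rightarrow> bool" where
  "upper c M \<longleftrightarrow> (\<forall>a\<le>c. \<forall>b\<le>c. b < a \<longrightarrow> M a b = 0)"

lemma tri_sum_red:
  assumes "upper c M" "i \<le> j" "j \<le> c"
  shows "(\<Sum>l=0..c. M i l * M l j) = (\<Sum>l=i..j. M i l * M l j)"
proof (rule sum.mono_neutral_right)
  show "finite {0..c}" by simp
  show "{i..j} \<subseteq> {0..c}" using assms by auto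
  show "\<forall>l\<in>{0..c} - {i..j}. M i l * M l j = 0" using assms unfolding upper_def by auto
qed

lemma tri_sum_lt:
  assumes "upper c M" "i < j" "j \<le> c"
  shows "(\<Sum>l=0..c. M i l * M l j) = M i i * M i j + M i j * M j j + (\<Sum>l=i+1..j-1. M i l * M l j)"
proof -
  have "(\<Sum>l=i..j. M i l * M l j) = M i i * M i j + (\<Sum>l=Suc i..j. M i l * M l j)"
    using assms by (simp add: sum.atLeast_Suc_atMost)
  also have "(\<Sum>l=Suc i..j. M i l * M l j) = (\<Sum>l=Suc i..j-1. M i l * M l j) + M i j * M j j"
  proof -
    have "j = Suc (j - 1)" using assms by simp
    hence "{Suc i..j} = insert j {Suc i..j-1}" using assms by auto
    thus ?thesis using assms by (simp add: add.commute)
  qed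
  finally show ?thesis using tri_sum_red[OF assms(1) _ assms(3), of i] assms by simp
qed

lemma tri_sum_eq:
  assumes "upper c M" "i \<le> c"
  shows "(\<Sum>l=0..c. M i l * M l i) = M i i * M i i"
  using tri_sum_red[OF assms(1) order_refl assms(2)] by simp

lemma tri_sum_gt:
  assumes "upper c M" "j < i" "i \<le> c"
  shows "(\<Sum>l=0..c. M i l * M l j) = 0"
proof (intro sum.neutral ballI)
  fix l assume l: "l \<in> {0..c}"
  show "M i l * M l j = 0"
  proof (cases "l < i")
    case True thus ?thesis using assms l unfolding upper_def by auto
  next
    case False thus ?thesis using assms l unfolding upper_def by auto
  qed
qed

lemma root_uniq:
  fixes a q lam r x :: real
  assumes "a > 0" "a * r\<^sup>2 - q * r + lam = 0" "a * x\<^sup>2 - q * x + lam = 0" "r \<le> x" "2 * a * x \<le> q"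
  shows "r = x"
proof (rule ccontr)
  assume "r \<noteq> x" hence rx: "r < x" using assms by simp
  have "(r - x) * (a * (r + x) - q) = 0" using assms(2,3) by (simp add: power2_eq_square algebra_simps)
  moreover have "a * (r + x) < a * (2 * x)" using assms(1) rx by (intro mult_strict_left_mono) auto
  ultimately show False using rx assms(5) by simp
qed

lemma Sm_lower: "j < i \<Longrightarrow> Sm c lam mu al i j = 0"
  by (subst Sm.simps) simp

lemma Sm_diag: "Sm c lam mu al i i = xd c lam mu al i"
  by (subst Sm.simps) simp

lemma Sm_upper: "upper c (Sm c lam mu al)"
  unfolding upper_def using Sm_lower by blast

lemma Sm_solves:
  assumes "lam > 0" "mu > 0" "al > 0" "c \<ge> 1"
  shows "solves_R_eq c lam mu al (Sm c lam mu al)"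
  unfolding solves_R_eq_def
proof (intro allI impI)
  fix i j assume ic: "i \<le> c" and jc: "j \<le> c"
  define S where "S = Sm c lam mu al"
  have U: "upper c S" unfolding S_def by (rule Sm_upper)
  note E = eq_entry[OF ic jc, of lam S mu al]
  consider "j < i" | "i = j" | "i < j" by linarith
  thus "Qup lam i j + mmul c (Sm c lam mu al) (Qloc c lam mu al) i j + mmul c (mmul c (Sm c lam mu al) (Sm c lam mu al)) (Qdown mu) i j = 0"
  proof cases
    case 1
    have "j - 1 < i" using 1 by simp
    thus ?thesis using E tri_sum_gt[OF U 1 ic] 1 unfolding S_def by (simp add: Sm_lower)
  next
    case 2
    have s: "(\<Sum>l=0..c. S i l * S l j) = S i i * S i i" using tri_sum_eq[OF U ic] 2 by simp
    show ?thesis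
    proof (cases "i = 0")
      case True
      thus ?thesis using E s 2 xd0(1)[OF assms(1,3,4), of mu] unfolding S_def by (simp add: Sm_diag)
    next
      case False
      have i1: "1 \<le> i" using False by simp
      note P = xd_props(1)[OF assms(1,2,3) i1 ic]
      have "S i (i - 1) = 0" unfolding S_def using False by (simp add: Sm_lower)
      thus ?thesis using E s 2 P i1 unfolding S_def[symmetric]
        by (simp add: Sm_diag S_def power2_eq_square algebra_simps)
    qed
  next
    case 3
    note T = tri_sum_lt[OF U 3 jc]
    define den where "den = lam + real (c - j) * al + real j * mu - real j * mu * (xd c lam mu al i + xd c lam mu al j)"
    define num where "num = real (c - j + 1) * al * S i (j - 1) + real j * mu * (\<Sum>k=i+1..j-1. S i k * S k j)"
    have dp: "den > 0" unfolding den_def by (rule den_pos[OF assms 3 jc])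
    have "S i j = num / den" unfolding S_def num_def den_def using 3 by (subst Sm.simps) simp
    hence Sij: "S i j * den = num" using dp by simp
    have j1: "1 \<le> j" using 3 by simp
    have "Qup lam i j + mmul c S (Qloc c lam mu al) i j + mmul c (mmul c S S) (Qdown mu) i j
       = num - S i j * den"
      unfolding E T num_def den_def using 3 j1 by (simp add: S_def Sm_diag algebra_simps)
    thus ?thesis using Sij unfolding S_def by simp
  qed
qed

theorem mainTheorem4:
  fixes c :: nat and lam mu al :: real and R :: "nat \<Rightarrow> nat \<Rightarrow> real"
  assumes "c \<ge> 1" and "lam > 0" and "mu > 0" and "al > 0" and "lam < real c * mu"
    and "minimal_nonneg_solution c lam mu al R"
  shows "(\<forall>i\<le>c. \<forall>j\<le>c. j < i \<longrightarrow> R i j = 0)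
    \<and> R 0 0 = lam / (lam + real c * al)
    \<and> R c c = lam / (real c * mu)
    \<and> (\<forall>i. 1 \<le> i \<and> i \<le> c - 1 \<longrightarrow>
         R i i = (lam + real i * mu + real (c - i) * al
                  - sqrt ((lam + real i * mu + real (c - i) * al)\<^sup>2 - 4 * real i * lam * mu))
                 / (2 * real i * mu))
    \<and> (\<forall>i j. i < j \<and> j \<le> c \<longrightarrow>
         R i j = (real (c - j + 1) * al * R i (j - 1)
                  + real j * mu * (\<Sum>k=i+1..j-1. R i k * R k j))
                 / (lam + real (c - j) * al + real j * mu - real j * mu * (R i i + R j j)))"
proof -
  note A = assms(2,3,4,1)
  define S where "S = Sm c lam mu al"
  have Rn: "nonneg_mat c R" and Rs: "solves_R_eq c lam mu al R"
    and Rmin: "\<And>T. nonneg_mat c T \<Longrightarrow> solves_R_eq c lam mu al T \<Longrightarrow> (\<forall>i\<le>c. \<forall>j\<le>c. R i j \<le> T i j)"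
    using assms(6) unfolding minimal_nonneg_solution_def by blast+
  have Sn: "nonneg_mat c S" unfolding nonneg_mat_def S_def using Sm_nonneg[OF A] by blast
  have Ss: "solves_R_eq c lam mu al S" unfolding S_def by (rule Sm_solves[OF A])
  have RS: "\<And>i j. i \<le> c \<Longrightarrow> j \<le> c \<Longrightarrow> R i j \<le> S i j" using Rmin[OF Sn Ss] by blast
  have R0: "\<And>i j. i \<le> c \<Longrightarrow> j \<le> c \<Longrightarrow> 0 \<le> R i j" using Rn unfolding nonneg_mat_def by blast
  have low: "\<forall>i\<le>c. \<forall>j\<le>c. j < i \<longrightarrow> R i j = 0"
  proof (intro allI impI)
    fix i j assume "i \<le> c" "j \<le> c" "j < i"
    thus "R i j = 0" using RS[of i j] R0[of i j] unfolding S_def by (simp add: Sm_lower)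
  qed
  have U: "upper c R" unfolding upper_def using low by blast
  have Req: "\<And>i j. i \<le> c \<Longrightarrow> j \<le> c \<Longrightarrow> (if i = j then lam else 0) - (lam + real (c - j) * al + real j * mu) * R i j
      + (if 1 \<le> j then real (c - j + 1) * al * R i (j - 1) else 0)
      + real j * mu * (\<Sum>l=0..c. R i l * R l j) = 0"
  proof -
    fix i j assume ic: "i \<le> c" and jc: "j \<le> c"
    have "Qup lam i j + mmul c R (Qloc c lam mu al) i j + mmul c (mmul c R R) (Qdown mu) i j = 0"
      using Rs ic jc unfolding solves_R_eq_def by blast
    thus "(if i = j then lam else 0) - (lam + real (c - j) * al + real j * mu) * R i j
      + (if 1 \<le> j then real (c - j + 1) * al * R i (j - 1) else 0)
      + real j * mu * (\<Sum>l=0..c. R i l * R l j) = 0" unfolding eq_entry[OF ic jc] .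
  qed
  have diag: "\<And>i. i \<le> c \<Longrightarrow> R i i = xd c lam mu al i"
  proof -
    fix i assume ic: "i \<le> c"
    note E = Req[OF ic ic]
    have s: "(\<Sum>l=0..c. R i l * R l i) = R i i * R i i" using tri_sum_eq[OF U ic] by simp
    show "R i i = xd c lam mu al i"
    proof (cases "i = 0")
      case True
      hence "(lam + real c * al) * R i i = lam" using E by simp
      moreover have "lam + real c * al > 0" using A by (simp add: add_pos_nonneg)
      ultimately show ?thesis using True by (simp add: xd_def field_simps)
    next
      case False
      have i1: "1 \<le> i" using False by simp
      have "R i (i - 1) = 0" using low ic False by simp
      hence f: "real i * mu * (R i i)\<^sup>2 - (lam + real i * mu + real (c - i) * al) * R i i + lam = 0"
        using E s i1 by (simp add: power2_eq_square algebra_simps)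
      note P = xd_props[OF assms(2,3,4) i1 ic]
      have le: "R i i \<le> xd c lam mu al i" using RS[OF ic ic] unfolding S_def Sm_diag .
      have ip: "real i * mu > 0" using i1 assms by simp
      show ?thesis by (rule root_uniq[OF ip f P(1) le]) (use P(2) in \<open>simp add: mult.assoc\<close>)
    qed
  qed
  have Rcc: "R c c = lam / (real c * mu)"
  proof -
    have c1: "1 \<le> c" using assms by simp
    note P = xd_props[OF assms(2,3,4) c1 order_refl]
    have cp: "real c * mu > 0" using assms by simp
    define y where "y = lam / (real c * mu)"
    have yy: "real c * mu * y = lam" using cp assms(1,3) by (simp add: y_def)
    have fy: "real c * mu * y\<^sup>2 - (lam + real c * mu + real (c - c) * al) * y + lam = 0"
      using yy by (simp add: power2_eq_square algebra_simps)
    have le: "xd c lam mu al c \<le> y" using P(4) yy cp by (metis mult_le_cancel_left_pos)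
    have "2 * (real c * mu) * y \<le> lam + real c * mu + real (c - c) * al" using yy assms(5) by simp
    hence "xd c lam mu al c = y" using root_uniq[OF cp _ fy le] P(1) by (simp add: mult.assoc)
    thus ?thesis using diag[of c] by (simp add: y_def)
  qed
  have mid: "\<forall>i. 1 \<le> i \<and> i \<le> c - 1 \<longrightarrow>
         R i i = (lam + real i * mu + real (c - i) * al
                  - sqrt ((lam + real i * mu + real (c - i) * al)\<^sup>2 - 4 * real i * lam * mu))
                 / (2 * real i * mu)"
  proof (intro allI impI)
    fix i assume i: "1 \<le> i \<and> i \<le> c - 1"
    hence "i \<le> c" "i \<noteq> 0" by auto
    thus "R i i = (lam + real i * mu + real (c - i) * al
                  - sqrt ((lam + real i * mu + real (c - i) * al)\<^sup>2 - 4 * real i * lam * mu))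
                 / (2 * real i * mu)" using diag[of i] unfolding xd_def by simp
  qed
  have off: "\<forall>i j. i < j \<and> j \<le> c \<longrightarrow>
         R i j = (real (c - j + 1) * al * R i (j - 1)
                  + real j * mu * (\<Sum>k=i+1..j-1. R i k * R k j))
                 / (lam + real (c - j) * al + real j * mu - real j * mu * (R i i + R j j))"
  proof (intro allI impI)
    fix i j assume ij: "i < j \<and> j \<le> c"
    hence ic: "i \<le> c" and jc: "j \<le> c" and ij': "i < j" by auto
    define den where "den = lam + real (c - j) * al + real j * mu - real j * mu * (R i i + R j j)"
    define num where "num = real (c - j + 1) * al * R i (j - 1) + real j * mu * (\<Sum>k=i+1..j-1. R i k * R k j)"
    have dp: "den > 0" unfolding den_def diag[OF ic] diag[OF jc] by (rule den_pos[OF A ij' jc])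
    have j1: "1 \<le> j" using ij' by simp
    have "num - R i j * den = 0" using Req[OF ic jc] tri_sum_lt[OF U ij' jc] ij' j1
      unfolding num_def den_def by (simp add: algebra_simps)
    hence "R i j = num / den" using dp by (simp add: field_simps)
    thus "R i j = (real (c - j + 1) * al * R i (j - 1)
                  + real j * mu * (\<Sum>k=i+1..j-1. R i k * R k j))
                 / (lam + real (c - j) * al + real j * mu - real j * mu * (R i i + R j j))"
      unfolding num_def den_def .
  qed
  have "R 0 0 = lam / (lam + real c * al)" using diag[of 0] unfolding xd_def by simp
  thus ?thesis using low Rcc mid off by blast
qed

end
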